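(* For every nonnegative integer $r$, $$\sum_{n=1}^{\infty}\frac{1}{(2n+1)(2n+2r+1)4^n}\frac{\binom{4n}{2n}}{\binom{2n+2r}{n+r}}=\frac{1}{2^{2r-1}}K(r)-\frac{1}{(2r+1)\binom{2r}{r}},$$ where $$K(r)=\frac{16^r}{(4r+1)\binom{4r}{2r}}\left(2+\sqrt{2}\sum_{k=0}^r \frac{\binom{4k}{2k}}{(4k-1)16^k}\right).$$ *)

theory Defs
  imports Complex_Main
begin

definition K :: "nat \<Rightarrow> real" where
  "K r = 16 ^ r / ((4 * real r + 1) * real ((4 * r) choose (2 * r))) *
     (2 + sqrt 2 * (\<Sum>k = 0..r. real ((4 * k) choose (2 * k)) / ((4 * real k - 1) * 16 ^ k)))"

end

theory Submission imports Defs "HOL-Analysis.Analysis" "HOL-Real_Asymp.Real_Asymp" begin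

definition u :: "nat \<Rightarrow> real" where "u n = real ((2*n) choose n) / 4^n"

lemma u_0[simp]: "u 0 = 1" by (simp add: u_def)

lemma u_Suc': "u (Suc n) * (2*real n+2) = u n * (2*real n+1)"
proof -
  define c1 where "c1 = real ((2*Suc n) choose Suc n)"
  define c0 where "c0 = real ((2*n) choose n)"
  have X: "c1 * (real n + 1) = 2*(2*real n+1) * c0"
  proof -
    have e: "2 * Suc n = Suc (Suc (2*n))" by simp
    have A: "c1 = fact (2*n+2) / (fact (n+1) * fact (n+1))"
      unfolding c1_def by (subst binomial_fact) (auto simp: e)
    have B: "c0 = fact (2*n) / (fact n * fact n)"
      unfolding c0_def by (subst binomial_fact) auto
    have C: "(fact (2*n+2)::real) = (2*real n+2)*(2*real n+1)*fact (2*n)"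
      by (simp add: fact_Suc algebra_simps e)
    have D: "(fact (n+1)::real) = (real n+1)*fact n" by (simp add: fact_Suc)
    have h: "\<And>N q F a::real. N \<noteq> 0 \<Longrightarrow> a \<noteq> 0 \<Longrightarrow> (2*N)*q*F/(N*a*(N*a))*N = 2*q*(F/(a*a))"
      by (simp add: field_simps)
    have "(2*real n+2) = 2*(real n+1)" by simp
    then show ?thesis unfolding A B C D using h[of "real n+1" "fact n"] by simp
  qed
  have U1: "u (Suc n) = c1 / (4 * 4^n)" unfolding u_def c1_def by simp
  have U0: "u n = c0 / 4^n" unfolding u_def c0_def by simp
  have "u (Suc n) * (2*real n+2) = (c1 * (real n + 1)) / (2 * 4^n)"
    unfolding U1 by (simp add: field_simps)
  also have "\<dots> = u n * (2*real n+1)" unfolding X U0 by (simp add: field_simps)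
  finally show ?thesis .
qed

lemma u_Suc: "u (Suc n) = u n * (2*real n+1) / (2*real n+2)"
proof -
  have "2*real n+2 > 0" by simp
  then show ?thesis using u_Suc'[of n] by (simp add: eq_divide_eq)
qed

lemma u_pos: "u n > 0" by (simp add: u_def)

lemma u_wallis: "u n ^ 2 * (2*real n+1) * (\<Prod>k=1..n. (4*real k^2) / (4*real k^2 - 1)) = 1"
proof (induction n)
  case 0 then show ?case by simp
next
  case (Suc n)
  have p: "(\<Prod>k=1..Suc n. (4*real k^2) / (4*real k^2 - 1)) =
      (4*(real n+1)^2) / (4*(real n+1)^2 - 1) * (\<Prod>k=1..n. (4*real k^2) / (4*real k^2 - 1))"
    by (subst prod.nat_ivl_Suc') (auto simp: add.commute)
  define P where "P = (\<Prod>k=1..n. (4*real k^2) / (4*real k^2 - 1))"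
  have e: "4*(real n+1)^2 - 1 = (2*real n+1)*(2*real n+3)" by (simp add: algebra_simps power2_eq_square)
  have nz: "2*real n+1 \<noteq> 0" "2*real n+3 \<noteq> 0" "2*real n+2 \<noteq> 0" by auto
  have "u (Suc n) ^ 2 * (2*real (Suc n)+1) * (\<Prod>k=1..Suc n. (4*real k^2) / (4*real k^2 - 1))
      = (u n * (2*real n+1) / (2*real n+2))^2 * (2*real n+3) * ((4*(real n+1)^2) / (4*(real n+1)^2 - 1) * P)"
    unfolding p u_Suc P_def by simp
  also have "\<dots> = (u n * (2*real n+1) / (2*real n+2))^2 * (2*real n+3) * ((4*(real n+1)^2) / ((2*real n+1)*(2*real n+3)) * P)"
    by (simp only: e)
  also have "\<dots> = u n ^ 2 * (2*real n+1) * P"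
    using nz by (simp add: divide_simps) algebra
  also have "\<dots> = 1" using Suc.IH unfolding P_def .
  finally show ?case .
qed

lemma v_lim: "(\<lambda>n. u (2*n) / u n) \<longlonglongrightarrow> 1 / sqrt 2"
proof -
  define Q where "Q n = u n ^ 2 * (2*real n+1)" for n
  have Qw: "Q n = 1 / (\<Prod>k=1..n. (4*real k^2) / (4*real k^2 - 1))" for n
  proof -
    define P where "P = (\<Prod>k=1..n. (4*real k^2) / (4*real k^2 - 1))"
    have h: "Q n * P = 1" using u_wallis[of n] unfolding Q_def P_def by simp
    then have "P \<noteq> 0" by auto
    with h show ?thesis unfolding P_def[symmetric] by (simp add: eq_divide_eq)
  qed
  have Qlim: "Q \<longlonglongrightarrow> 2 / pi"
  proof -
    have "(\<lambda>n. 1 / (\<Prod>k=1..n. (4*real k^2) / (4*real k^2 - 1))) \<longlonglongrightarrow> 1 / (pi/2)"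
      by (intro tendsto_divide tendsto_const wallis) auto
    then show ?thesis unfolding Qw[abs_def] by simp
  qed
  have sm: "strict_mono (\<lambda>n::nat. 2*n)" by (auto simp: strict_mono_def)
  have Q2lim: "(\<lambda>n. Q (2*n)) \<longlonglongrightarrow> 2 / pi"
    using LIMSEQ_subseq_LIMSEQ[OF Qlim sm] by (simp add: o_def)
  have rlim: "(\<lambda>n. (2*real n+1) / (4*real n+1)) \<longlonglongrightarrow> 1/2" by real_asymp
  have lim2: "(\<lambda>n. Q (2*n) / Q n * ((2*real n+1) / (4*real n+1))) \<longlonglongrightarrow> (2/pi) / (2/pi) * (1/2)"
    by (intro tendsto_intros Q2lim Qlim rlim) auto
  have eq: "Q (2*n) / Q n * ((2*real n+1) / (4*real n+1)) = (u (2*n) / u n)^2" for n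
  proof -
    have "u n > 0" "u (2*n) > 0" using u_pos by auto
    moreover have "2*real n+1 \<noteq> 0" "4*real n+1 \<noteq> 0" by auto
    ultimately show ?thesis unfolding Q_def by (simp add: divide_simps power2_eq_square)
  qed
  have "(\<lambda>n. (u (2*n) / u n)^2) \<longlonglongrightarrow> 1/2" using lim2 unfolding eq by simp
  then have "(\<lambda>n. sqrt ((u (2*n) / u n)^2)) \<longlonglongrightarrow> sqrt (1/2)" by (rule tendsto_real_sqrt)
  moreover have "sqrt ((u (2*n) / u n)^2) = u (2*n) / u n" for n
    using u_pos[of n] u_pos[of "2*n"] by simp
  ultimately show ?thesis by (simp add: real_sqrt_divide)
qed

lemma u_shift: "(\<lambda>n. u n / u (n + r)) \<longlonglongrightarrow> 1"
proof (induction r)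
  case 0 then show ?case using u_pos by (simp add: less_imp_neq[symmetric])
next
  case (Suc r)
  have e: "u n / u (n + Suc r) = u n / u (n + r) * ((2*real (n+r)+2) / (2*real (n+r)+1))" for n
  proof -
    have "u (n+r) > 0" using u_pos by auto
    moreover have "2*real (n+r)+1 \<noteq> 0" "2*real (n+r)+2 \<noteq> 0" by auto
    ultimately show ?thesis by (simp add: u_Suc divide_simps)
  qed
  have "(\<lambda>n. (2*real (n+r)+2) / (2*real (n+r)+1)) \<longlonglongrightarrow> 1" by real_asymp
  then have "(\<lambda>n. u n / u (n + r) * ((2*real (n+r)+2) / (2*real (n+r)+1))) \<longlonglongrightarrow> 1 * 1"
    by (intro tendsto_mult Suc.IH)
  then show ?case unfolding e by simp
qed

definition f :: "nat \<Rightarrow> nat \<Rightarrow> real" where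
  "f r n = u (2*n) / (u (n+r) * (2*real n+1) * (2*real n+2*real r+1) * 4^r)"
definition PP :: "nat \<Rightarrow> real" where
  "PP r = (\<Sum>k=0..r. u (2*k) / (4*real k - 1))"
definition RR :: "nat \<Rightarrow> real" where
  "RR r = 2*(2+sqrt 2*PP r)/((4*real r+1)*u (2*r)*4^r) - 1/((2*real r+1)*u r*4^r)"
definition ac :: "nat \<Rightarrow> real" where
  "ac r = 2*(2*real r+1)*(real r+1)/((4*real r+3)*(4*real r+5))"
definition cc :: "nat \<Rightarrow> real" where
  "cc r = 2/((4*real r+3)*(4*real r+5))"
definition g :: "nat \<Rightarrow> nat \<Rightarrow> real" where
  "g r n = cc r * real n * (2*real n+1) * f r n"

lemma u2: "u (2*Suc n) = u (2*n)*(4*real n+1)*(4*real n+3)/((4*real n+2)*(4*real n+4))"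
proof -
  have "2*Suc n = Suc (Suc (2*n))" by simp
  then show ?thesis by (simp add: u_Suc field_simps)
qed

lemma us: "u (n + Suc r) = u (n+r)*(2*real n+2*real r+1)/(2*real n+2*real r+2)"
  by (simp add: u_Suc algebra_simps)
lemma us': "u (Suc n + r) = u (n+r)*(2*real n+2*real r+1)/(2*real n+2*real r+2)"
  by (simp add: u_Suc algebra_simps)

lemma alg:
  fixes N R X Y q :: real
  assumes "N \<ge> 0" "R \<ge> 0" "X > 0" "Y > 0" "q > 0"
  shows "X / ((Y*(2*N+2*R+1)/(2*N+2*R+2)) * (2*N+1)*(2*N+2*(1+R)+1)*(4*q)) =
    (2*(2*R+1)*(R+1)/((4*R+3)*(4*R+5))) * (X/(Y*(2*N+1)*(2*N+2*R+1)*q)) +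
    ((2/((4*R+3)*(4*R+5))) * (1+N)*(2*(1+N)+1) * ((X*(4*N+1)*(4*N+3)/((4*N+2)*(4*N+4))) / ((Y*(2*N+2*R+1)/(2*N+2*R+2))*(2*(1+N)+1)*(2*(1+N)+2*R+1)*q))
     - (2/((4*R+3)*(4*R+5))) * N*(2*N+1) * (X/(Y*(2*N+1)*(2*N+2*R+1)*q)))"
proof -
  have nz: "2*N+2*R+1 \<noteq> 0" "2*N+2*R+2 \<noteq> 0" "2*N+1 \<noteq> 0" "2*N+2*(1+R)+1 \<noteq> 0" "4*R+3 \<noteq> 0" "4*R+5 \<noteq> 0"
    "4*N+2 \<noteq> 0" "4*N+4 \<noteq> 0" "2*(1+N)+1 \<noteq> 0" "2*(1+N)+2*R+1 \<noteq> 0" "X \<noteq> 0" "Y \<noteq> 0" "q \<noteq> 0" "8*N+8*R+12 \<noteq> 0"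
    using assms by auto
  show ?thesis using nz by (simp add: divide_simps) (simp add: algebra_simps)
qed

lemma step: "f (Suc r) n = ac r * f r n + (g r (Suc n) - g r n)"
  unfolding f_def g_def ac_def cc_def
  apply (simp only: u2 us us' of_nat_Suc power_Suc)
  apply (rule alg)
  using u_pos by auto

lemma u1: "u (Suc 0) = 1/2" using u_Suc[of 0] by simp
lemma u2': "u 2 = 3/8" using u_Suc[of 1] u1 by (simp add: numeral_2_eq_2)

lemma g_lim: "(\<lambda>n. g r n) \<longlonglongrightarrow> cc r * sqrt 2 / (4*4^r)"
proof -
  have e: "g r n = cc r / 4^r * (real n / (2*real n+2*real r+1)) * (u (2*n) / u n) * (u n / u (n+r))" for n
  proof -
    have "u n > 0" "u (n+r) > 0" "u (2*n) > 0" using u_pos by auto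
    moreover have "2*real n+1 \<noteq> 0" "2*real n+2*real r+1 \<noteq> 0" by auto
    ultimately show ?thesis unfolding g_def f_def by (simp add: divide_simps)
  qed
  have l1: "(\<lambda>n. real n / (2*real n+2*real r+1)) \<longlonglongrightarrow> 1/2" by real_asymp
  have "(\<lambda>n. cc r / 4^r * (real n / (2*real n+2*real r+1)) * (u (2*n) / u n) * (u n / u (n+r)))
        \<longlonglongrightarrow> cc r / 4^r * (1/2) * (1 / sqrt 2) * 1"
    by (intro tendsto_mult tendsto_const l1 v_lim u_shift)
  moreover have "cc r / 4^r * (1/2) * (1 / sqrt 2) * 1 = cc r * sqrt 2 / (4*4^r)"
  proof -
    have "sqrt 2 * sqrt 2 = 2" by simp
    then show ?thesis by (simp add: field_simps)
  qed
  ultimately show ?thesis unfolding e by simp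
qed

lemma base: "(\<lambda>m. f 0 (Suc m)) sums RR 0"
proof -
  define v where "v n = u (2*n) / u n" for n
  have fe: "f 0 n = 4 * (v n - v (Suc n))" for n
  proof -
    have "u n > 0" "u (2*n) > 0" using u_pos by auto
    moreover have "2*real n+1 \<noteq> 0" "4*real n+2 \<noteq> 0" "4*real n+4 \<noteq> 0" "2*real n+2 \<noteq> 0" by auto
    ultimately show ?thesis unfolding f_def v_def u2 u_Suc by (simp add: divide_simps) algebra
  qed
  have "(\<lambda>m. v (Suc m)) \<longlonglongrightarrow> 1 / sqrt 2" unfolding v_def using LIMSEQ_Suc[OF v_lim] .
  then have "(\<lambda>m. v (Suc m) - v (Suc (Suc m))) sums (v (Suc 0) - 1 / sqrt 2)"
    by (rule telescope_sums')
  then have "(\<lambda>m. 4 * (v (Suc m) - v (Suc (Suc m)))) sums (4 * (v (Suc 0) - 1 / sqrt 2))"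
    by (rule sums_mult)
  moreover have "4 * (v (Suc 0) - 1 / sqrt 2) = RR 0"
  proof -
    have "v (Suc 0) = 3/4" unfolding v_def by (simp add: u1 u2')
    moreover have "sqrt 2 * sqrt 2 = 2" by simp
    ultimately show ?thesis unfolding RR_def PP_def by (simp add: field_simps)
  qed
  ultimately show ?thesis unfolding fe by simp
qed

lemma algR:
  fixes R X Y q s Pr :: real
  assumes "R \<ge> 0" "X > 0" "Y > 0" "q > 0"
  shows "(2*(2*R+1)*(R+1)/((4*R+3)*(4*R+5))) * (2*(2+s*Pr)/((4*R+1)*X*q) - 1/((2*R+1)*Y*q))
     + ((2/((4*R+3)*(4*R+5))) * s / (4*q) - (2/((4*R+3)*(4*R+5))) * 1 * 3 * ((3/8) / ((Y*(2*R+1)/(2*R+2)) * 3 * (2+2*R+1) * q)))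
   = 2*(2+s*(Pr + (X*(4*R+1)*(4*R+3)/((4*R+2)*(4*R+4))) / (4*(R+1)-1)))/((4*(R+1)+1)*(X*(4*R+1)*(4*R+3)/((4*R+2)*(4*R+4)))*(4*q))
     - 1/((2*(R+1)+1)*(Y*(2*R+1)/(2*R+2))*(4*q))"
proof -
  have nz: "4*R+3 \<noteq> 0" "4*R+5 \<noteq> 0" "4*R+1 \<noteq> 0" "2*R+1 \<noteq> 0" "2*R+2 \<noteq> 0" "4*R+2 \<noteq> 0" "4*R+4 \<noteq> 0"
    "2+2*R+1 \<noteq> 0" "4*(R+1)-1 \<noteq> 0" "4*(R+1)+1 \<noteq> 0" "2*(R+1)+1 \<noteq> 0" "X \<noteq> 0" "Y \<noteq> 0" "q \<noteq> 0" "96*R+120 \<noteq> 0"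
    using assms by auto
  show ?thesis using nz by (simp add: divide_simps) (simp add: algebra_simps)
qed

lemma main: "(\<lambda>m. f r (Suc m)) sums RR r"
proof (induction r)
  case 0 then show ?case by (rule base)
next
  case (Suc r)
  have A: "(\<lambda>m. ac r * f r (Suc m)) sums (ac r * RR r)" using Suc.IH by (rule sums_mult)
  have "(\<lambda>m. g r (Suc m)) \<longlonglongrightarrow> cc r * sqrt 2 / (4*4^r)" using LIMSEQ_Suc[OF g_lim] .
  then have B: "(\<lambda>m. g r (Suc (Suc m)) - g r (Suc m)) sums (cc r * sqrt 2 / (4*4^r) - g r (Suc 0))"
    by (rule telescope_sums)
  have "(\<lambda>m. ac r * f r (Suc m) + (g r (Suc (Suc m)) - g r (Suc m))) sums
      (ac r * RR r + (cc r * sqrt 2 / (4*4^r) - g r (Suc 0)))"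
    using A B by (rule sums_add)
  moreover have "ac r * RR r + (cc r * sqrt 2 / (4*4^r) - g r (Suc 0)) = RR (Suc r)"
  proof -
    have P: "PP (Suc r) = PP r + u (2*Suc r) / (4*real (Suc r) - 1)" unfolding PP_def by simp
    have g1: "g r (Suc 0) = cc r * 1 * 3 * ((3/8) / (u (Suc r) * 3 * (2 + 2*real r+1) * 4^r))"
      unfolding g_def f_def by (simp add: u2')
    show ?thesis unfolding RR_def P g1 ac_def cc_def u2 u_Suc[of r] power_Suc
      apply (simp only: of_nat_Suc)
      using algR[of "real r" "u (2*r)" "u r" "4^r" "sqrt 2" "PP r"] u_pos by (simp add: add.commute)
  qed
  ultimately show ?case unfolding step by simp
qed

lemma cb: "real ((2*k) choose k) = u k * 4^k" by (simp add: u_def)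
lemma cb4: "real ((4*k) choose (2*k)) = u (2*k) * 16^k"
proof -
  have "4*k = 2*(2*k)" by simp
  then have "real ((4*k) choose (2*k)) = u (2*k) * 4^(2*k)" using cb[of "2*k"] by simp
  also have "(4::real)^(2*k) = 16^k" by (simp add: power_mult)
  finally show ?thesis .
qed
lemma cb2: "real ((2*n+2*r) choose (n+r)) = u (n+r) * 4^(n+r)"
  using cb[of "n+r"] by (simp add: algebra_simps)

lemma pw: "(2::real) powr (2 * real r - 1) = 4^r / 2"
proof -
  have "(2::real) powr (2 * real r - 1) = 2 powr (real (2*r)) / 2" by (simp add: powr_diff)
  also have "\<dots> = 2^(2*r) / 2" by (subst powr_realpow) auto
  also have "(2::real)^(2*r) = 4^r" by (simp add: power_mult)
  finally show ?thesis by simp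
qed

lemma algT:
  fixes N R X Y a b :: real
  assumes "N \<ge> 0" "R \<ge> 0" "X > 0" "Y > 0" "a > 0" "b > 0"
  shows "1 / ((2*N+1) * (2*N+2*R+1) * a) * (X*(a*a) / (Y*(a*b))) = X / (Y*(2*N+1)*(2*N+2*R+1)*b)"
proof -
  have "2*N+1 \<noteq> 0" "2*N+2*R+1 \<noteq> 0" using assms by auto
  then show ?thesis using assms by (simp add: divide_simps)
qed

lemma algV:
  fixes R X Y c q s P :: real
  assumes "R \<ge> 0" "X > 0" "Y > 0" "c > 0" "q > 0"
  shows "c / ((4*R+1) * (X*c)) * (2 + s*P) / (q/2) - 1/((2*R+1)*(Y*q)) =
    2*(2+s*P)/((4*R+1)*X*q) - 1/((2*R+1)*Y*q)"
proof -
  have "4*R+1 \<noteq> 0" "2*R+1 \<noteq> 0" using assms by auto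
  then show ?thesis using assms by (simp add: divide_simps)
qed

theorem theorem4p0p1:
  fixes r :: nat
  shows "(\<lambda>m. let n = m + 1 in
            1 / ((2 * real n + 1) * (2 * real n + 2 * real r + 1) * 4 ^ n) *
            (real ((4 * n) choose (2 * n)) / real ((2 * n + 2 * r) choose (n + r))))
         sums (K r / 2 powr (2 * real r - 1) - 1 / ((2 * real r + 1) * real ((2 * r) choose r)))"
proof -
  have t: "(let n = m + 1 in
            1 / ((2 * real n + 1) * (2 * real n + 2 * real r + 1) * 4 ^ n) *
            (real ((4 * n) choose (2 * n)) / real ((2 * n + 2 * r) choose (n + r)))) = f r (Suc m)" for m
  proof -
    define n where "n = Suc m"
    have e1: "(16::real)^n = 4^n*4^n" by (simp flip: power_mult_distrib)
    have e2: "(4::real)^(n+r) = 4^n*4^r" by (rule power_add)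
    have "1 / ((2 * real n + 1) * (2 * real n + 2 * real r + 1) * 4 ^ n) *
            (real ((4 * n) choose (2 * n)) / real ((2 * n + 2 * r) choose (n + r))) = f r n"
      unfolding cb4 cb2 f_def e1 e2 by (rule algT) (use u_pos in auto)
    then show ?thesis unfolding n_def Let_def by simp
  qed
  have v: "K r / 2 powr (2 * real r - 1) - 1 / ((2 * real r + 1) * real ((2 * r) choose r)) = RR r"
  proof -
    have s: "(\<Sum>k = 0..r. real ((4 * k) choose (2 * k)) / ((4 * real k - 1) * 16 ^ k)) = PP r"
      unfolding PP_def cb4 by (intro sum.cong refl) simp
    have Kr: "K r = 16^r/((4*real r+1)*(u (2*r)*16^r))*(2+sqrt 2*PP r)"
      unfolding K_def s cb4[of r] ..
    show ?thesis unfolding Kr pw cb RR_def by (rule algV) (use u_pos in auto)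
  qed
  show ?thesis unfolding t v by (rule main)
qed

end
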